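(* Let $\varepsilon>0$ and let $B$ be the closed unit ball of $C(0,1)$ (sup norm). There exists a non-negative, $1$-Lipschitz, $\varepsilon$-convex function $f:B\to\mathbb{R}$ such that for every convex function $g:B\to\mathbb{R}$, $$\sup\{|f(x)-g(x)|:x\in B\}\ge1 .$$
   Context: $C(0,1)$ is the space of continuous real functions on $[0,1]$ with the supremum norm. A function $f$ on a convex set $C$ is $\varepsilon$-convex if $f(tx+(1-t)y)\le tf(x)+(1-t)f(y)+\varepsilon$ for all $x,y\in C$, $t\in[0,1]$. *)

theory Defs
  imports "HOL-Analysis.Analysis"
begin

text \<open>C(0,1) is represented by real functions continuous on [0,1] and
  normalised to vanish outside [0,1] (so each element of C(0,1) has exactly
  one representative; vector operations are pointwise).\<close>

definition C01 :: "(real \<Rightarrow> real) set" where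
  "C01 = {x. continuous_on {0..1} x \<and> (\<forall>s. s \<notin> {0..1} \<longrightarrow> x s = 0)}"

definition supnorm :: "(real \<Rightarrow> real) \<Rightarrow> real" where
  "supnorm x = (SUP s\<in>{0..1}. \<bar>x s\<bar>)"

definition unit_ball_C01 :: "(real \<Rightarrow> real) set" where
  "unit_ball_C01 = {x \<in> C01. supnorm x \<le> 1}"

definition lipschitz_C01 :: "(real \<Rightarrow> real) set \<Rightarrow> real \<Rightarrow> ((real \<Rightarrow> real) \<Rightarrow> real) \<Rightarrow> bool" where
  "lipschitz_C01 S L f \<longleftrightarrow>
     (\<forall>x\<in>S. \<forall>y\<in>S. \<bar>f x - f y\<bar> \<le> L * supnorm (\<lambda>s. x s - y s))"

definition eps_convex_C01 :: "(real \<Rightarrow> real) set \<Rightarrow> real \<Rightarrow> ((real \<Rightarrow> real) \<Rightarrow> real) \<Rightarrow> bool" where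
  "eps_convex_C01 S \<epsilon> f \<longleftrightarrow>
     (\<forall>x\<in>S. \<forall>y\<in>S. \<forall>t\<in>{0..1::real}.
        f (\<lambda>s. t * x s + (1 - t) * y s) \<le> t * f x + (1 - t) * f y + \<epsilon>)"

definition convex_C01 :: "(real \<Rightarrow> real) set \<Rightarrow> ((real \<Rightarrow> real) \<Rightarrow> real) \<Rightarrow> bool" where
  "convex_C01 S f \<longleftrightarrow>
     (\<forall>x\<in>S. \<forall>y\<in>S. \<forall>t\<in>{0..1::real}.
        f (\<lambda>s. t * x s + (1 - t) * y s) \<le> t * f x + (1 - t) * f y)"

end

theory Submission
  imports Defs
begin

lemma C01_bdd:
  assumes "x \<in> C01"
  shows "bdd_above ((\<lambda>s. \<bar>x s\<bar>) ` {0..1})"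
proof -
  have "continuous_on {0..1} (\<lambda>s. \<bar>x s\<bar>)"
    using assms unfolding C01_def by (auto intro: continuous_intros)
  then have "compact ((\<lambda>s. \<bar>x s\<bar>) ` {0..1::real})"
    by (intro compact_continuous_image) auto
  then show ?thesis by (intro bounded_imp_bdd_above compact_imp_bounded)
qed

lemma abs_le_supnorm:
  assumes "x \<in> C01" "s \<in> {0..1}"
  shows "\<bar>x s\<bar> \<le> supnorm x"
  unfolding supnorm_def using assms C01_bdd by (intro cSUP_upper) auto

lemma supnorm_le:
  assumes "\<And>s. s \<in> {0..1} \<Longrightarrow> \<bar>x s\<bar> \<le> c"
  shows "supnorm x \<le> c"
  unfolding supnorm_def using assms by (intro cSUP_least) auto

lemma ball_abs:
  assumes "x \<in> unit_ball_C01" "s \<in> {0..1}"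
  shows "\<bar>x s\<bar> \<le> 1"
  using assms abs_le_supnorm unfolding unit_ball_C01_def by force

lemma C01_diff:
  assumes "x \<in> C01" "y \<in> C01"
  shows "(\<lambda>s. x s - y s) \<in> C01"
  using assms unfolding C01_def by (auto intro: continuous_intros)

lemma diff_le_supnorm:
  assumes "x \<in> C01" "y \<in> C01" "s \<in> {0..1}"
  shows "\<bar>x s - y s\<bar> \<le> supnorm (\<lambda>s. x s - y s)"
  using abs_le_supnorm[OF C01_diff[OF assms(1,2)] assms(3)] by simp

lemma ball_comb:
  assumes "x \<in> unit_ball_C01" "y \<in> unit_ball_C01" "0 \<le> t" "t \<le> 1"
  shows "(\<lambda>s. t * x s + (1 - t) * y s) \<in> unit_ball_C01"
proof -
  have c: "(\<lambda>s. t * x s + (1 - t) * y s) \<in> C01"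
    using assms unfolding unit_ball_C01_def C01_def
    by (auto intro!: continuous_on_add continuous_on_mult continuous_on_const)
  have "\<bar>t * x s + (1 - t) * y s\<bar> \<le> 1" if "s \<in> {0..1}" for s
  proof -
    have "\<bar>x s\<bar> \<le> 1" "\<bar>y s\<bar> \<le> 1" using ball_abs assms that by auto
    then have "\<bar>t * x s\<bar> \<le> t" "\<bar>(1-t) * y s\<bar> \<le> 1 - t"
      using assms by (auto simp: abs_mult intro: mult_left_le)
    then show ?thesis by linarith
  qed
  then show ?thesis using c supnorm_le unfolding unit_ball_C01_def by auto
qed


lemma xlnx_aux:
  fixes a t c :: real
  assumes "0 \<le> a" "0 \<le> t" "t \<le> 1" "t * a \<le> c"
  shows "- (t * a * ln c) \<le> t * (- (a * ln a)) + (1 - t) * a"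
proof (cases "t = 0 \<or> a = 0")
  case True then show ?thesis using assms by auto
next
  case False
  then have tp: "t > 0" and ap: "a > 0" using assms by auto
  then have "t * a > 0" by simp
  then have "ln (t * a) \<le> ln c" using assms(4) by (subst ln_le_cancel_iff) auto
  moreover have "ln (t * a) = ln t + ln a" using tp ap by (simp add: ln_mult)
  moreover have "- (t * ln t) \<le> 1 - t"
  proof -
    have "ln (1/t) \<le> 1/t - 1" using tp by (intro ln_le_minus_one) simp
    then have "- ln t \<le> 1/t - 1" using tp by (simp add: ln_div)
    then have "t * (- ln t) \<le> t * (1/t - 1)" using tp by (intro mult_left_mono) auto
    also have "t * (1/t - 1) = 1 - t" using tp by (simp add: field_simps)
    finally show ?thesis by simp
  qed
  ultimately have "- (t * a * ln c) \<le> - (t * a * (ln t + ln a))"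
    using \<open>t * a > 0\<close> by (simp add: mult_left_mono)
  also have "\<dots> = t * (- (a * ln a)) + a * (- (t * ln t))" by (simp add: algebra_simps)
  also have "\<dots> \<le> t * (- (a * ln a)) + a * (1 - t)"
    using mult_left_mono[OF \<open>- (t * ln t) \<le> 1 - t\<close> assms(1)] by simp
  finally show ?thesis by (simp add: algebra_simps)
qed

lemma xlnx_mix:
  fixes a b t :: real
  assumes "0 \<le> a" "0 \<le> b" "0 \<le> t" "t \<le> 1"
  shows "- ((t * a + (1 - t) * b) * ln (t * a + (1 - t) * b))
     \<le> t * (- (a * ln a)) + (1 - t) * (- (b * ln b)) + ((1 - t) * a + t * b)"
proof -
  define c where "c = t * a + (1 - t) * b"
  have h1: "- (t * a * ln c) \<le> t * (- (a * ln a)) + (1 - t) * a"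
    using assms by (intro xlnx_aux) (auto simp: c_def)
  have h2: "- ((1 - t) * b * ln c) \<le> (1 - t) * (- (b * ln b)) + (1 - (1 - t)) * b"
    using assms by (intro xlnx_aux) (auto simp: c_def)
  have "- (c * ln c) = - (t * a * ln c) - ((1 - t) * b * ln c)"
    by (simp add: c_def algebra_simps)
  then show ?thesis using h1 h2 unfolding c_def[symmetric] by simp
qed

lemma xlnx_nonneg:
  fixes a :: real
  assumes "0 \<le> a" "a \<le> 1"
  shows "0 \<le> - (a * ln a)"
proof (cases "a = 0")
  case False
  then have "ln a \<le> 0" using assms by simp
  then show ?thesis using assms by (simp add: mult_nonneg_nonpos)
qed simp


definition Iv :: "nat \<Rightarrow> real set" where
  "Iv n = {1 / (real n + 2) <..< 1 / (real n + 1)}"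

definition pt :: "nat \<Rightarrow> nat set \<Rightarrow> real" where
  "pt n = (SOME q. inj_on q (Pow {..<n}) \<and> q ` Pow {..<n} \<subseteq> Iv n)"

definition sg :: "nat set \<Rightarrow> nat \<Rightarrow> real" where
  "sg A i = (if i \<in> A then 1 else -1)"

definition wv :: "nat \<Rightarrow> (nat \<Rightarrow> real) \<Rightarrow> nat set \<Rightarrow> real" where
  "wv n l A = (\<Sum>i<n. l i * sg A i) + l n"

definition Dd :: "nat \<Rightarrow> (real \<Rightarrow> real) \<Rightarrow> (nat \<Rightarrow> real) \<Rightarrow> real" where
  "Dd n x l = Max ((\<lambda>A. \<bar>x (pt n A) - wv n l A\<bar>) ` Pow {..<n})"

definition Smp :: "nat \<Rightarrow> (nat \<Rightarrow> real) set" where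
  "Smp n = {l. (\<forall>i\<le>n. 0 \<le> l i) \<and> sum l {..n} = 1}"

definition Ent :: "nat \<Rightarrow> (nat \<Rightarrow> real) \<Rightarrow> real" where
  "Ent n l = (\<Sum>i\<le>n. - (l i * ln (l i)))"

definition phi :: "real \<Rightarrow> nat \<Rightarrow> (real \<Rightarrow> real) \<Rightarrow> real" where
  "phi e n x = (INF l\<in>Smp n. e * Ent n l + Dd n x l)"

definition FF :: "real \<Rightarrow> (real \<Rightarrow> real) \<Rightarrow> real" where
  "FF e x = (SUP n. phi e n x)"

lemma pt_exists: "\<exists>q. inj_on q (Pow {..<n}) \<and> q ` Pow {..<n} \<subseteq> Iv n"
proof -
  have "infinite (Iv n)" unfolding Iv_def by (simp add: frac_less2)
  then obtain B where B: "finite B" "card B = card (Pow {..<n::nat})" "B \<subseteq> Iv n"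
    using infinite_arbitrarily_large by blast
  then obtain h where "bij_betw h (Pow {..<n}) B"
    using finite_same_card_bij[of "Pow {..<n}" B] by auto
  then show ?thesis using B unfolding bij_betw_def by auto
qed

lemma pt_inj: "inj_on (pt n) (Pow {..<n})"
  and pt_Iv: "A \<subseteq> {..<n} \<Longrightarrow> pt n A \<in> Iv n"
  using someI_ex[OF pt_exists[of n]] unfolding pt_def[symmetric] by auto

lemma Iv_sub: "Iv n \<subseteq> {0..1}"
proof -
  have a: "0 < 1/(real n+2)" "1/(real n+1) \<le> 1" by auto
  show ?thesis unfolding Iv_def
  proof
    fix x assume "x \<in> {1 / (real n + 2)<..<1 / (real n + 1)}"
    then have h: "1/(real n+2) < x" "x < 1/(real n+1)" by simp_all
    show "x \<in> {0..1}" unfolding atLeastAtMost_iff using a h by linarith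
  qed
qed

lemma Iv_disj:
  assumes "n \<noteq> m" shows "Iv n \<inter> Iv m = {}"
proof -
  have "Iv n \<inter> Iv m = {}" if "n < m" for n m :: nat
  proof -
    have "real m + 1 \<ge> real n + 2" using that by simp
    then have "1 / (real m + 1) \<le> 1 / (real n + 2)"
      by (intro divide_left_mono) auto
    then show ?thesis unfolding Iv_def by auto
  qed
  then show ?thesis using assms by (cases "n < m") (auto simp: Int_commute)
qed

lemma pt_01: "A \<subseteq> {..<n} \<Longrightarrow> pt n A \<in> {0..1}"
  using pt_Iv Iv_sub by blast

lemma Smp_le1: "l \<in> Smp n \<Longrightarrow> i \<le> n \<Longrightarrow> l i \<le> 1"
  unfolding Smp_def using member_le_sum[of i "{..n}" l] by auto

lemma Ent_nonneg: "l \<in> Smp n \<Longrightarrow> 0 \<le> Ent n l"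
  unfolding Ent_def by (intro sum_nonneg xlnx_nonneg) (auto simp: Smp_def Smp_le1)

lemma Smp_mix:
  assumes "l \<in> Smp n" "m \<in> Smp n" "0 \<le> t" "t \<le> 1"
  shows "(\<lambda>i. t * l i + (1 - t) * m i) \<in> Smp n"
  using assms unfolding Smp_def by (auto simp: sum.distrib sum_distrib_left[symmetric])

lemma Ent_mix:
  assumes "l \<in> Smp n" "m \<in> Smp n" "0 \<le> t" "t \<le> 1"
  shows "Ent n (\<lambda>i. t * l i + (1 - t) * m i) \<le> t * Ent n l + (1 - t) * Ent n m + 1"
proof -
  have "Ent n (\<lambda>i. t * l i + (1 - t) * m i) \<le>
     (\<Sum>i\<le>n. t * (- (l i * ln (l i))) + (1 - t) * (- (m i * ln (m i))) + ((1 - t) * l i + t * m i))"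
    unfolding Ent_def using assms by (intro sum_mono xlnx_mix) (auto simp: Smp_def)
  also have "\<dots> = t * Ent n l + (1 - t) * Ent n m + ((1 - t) * sum l {..n} + t * sum m {..n})"
  proof -
    have g: "(\<Sum>i\<in>S. t * a i + (1-t) * b i + ((1-t) * c i + t * d i))
       = t * sum a S + (1-t) * sum b S + ((1-t) * sum c S + t * sum d S)" for S and a b c d :: "nat \<Rightarrow> real"
      by (simp add: sum.distrib sum_distrib_left)
    show ?thesis unfolding Ent_def by (rule g)
  qed
  also have "\<dots> = t * Ent n l + (1 - t) * Ent n m + 1"
    using assms by (simp add: Smp_def)
  finally show ?thesis .
qed

lemma Dd_ge: "A \<subseteq> {..<n} \<Longrightarrow> \<bar>x (pt n A) - wv n l A\<bar> \<le> Dd n x l"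
  unfolding Dd_def by (intro Max_ge) auto

lemma Dd_le: "(\<And>A. A \<subseteq> {..<n} \<Longrightarrow> \<bar>x (pt n A) - wv n l A\<bar> \<le> c) \<Longrightarrow> Dd n x l \<le> c"
  unfolding Dd_def by (subst Max_le_iff) auto

lemma Dd_nonneg: "0 \<le> Dd n x l"
  using Dd_ge[of "{}" n x l] by simp

lemma wv_mix: "wv n (\<lambda>i. t * l i + (1 - t) * m i) A = t * wv n l A + (1 - t) * wv n m A"
proof -
  have "t * (\<Sum>i<n. l i * sg A i) + (1 - t) * (\<Sum>i<n. m i * sg A i)
     = (\<Sum>i<n. t * (l i * sg A i) + (1 - t) * (m i * sg A i))"
    by (simp add: sum.distrib sum_distrib_left)
  also have "\<dots> = (\<Sum>i<n. (t * l i + (1 - t) * m i) * sg A i)"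
    by (intro sum.cong) (auto simp: algebra_simps)
  finally show ?thesis unfolding wv_def by (simp add: algebra_simps)
qed

lemma delta_Smp: "j \<le> n \<Longrightarrow> (\<lambda>i. if i = j then 1 else 0) \<in> Smp n"
  unfolding Smp_def by auto

lemma delta_Ent: "Ent n (\<lambda>i. if i = j then 1 else 0) = 0"
  unfolding Ent_def by (intro sum.neutral) auto

lemma Smp_ne: "Smp n \<noteq> {}"
  using delta_Smp[of n n] by blast

lemma phi_bdd: "0 \<le> e \<Longrightarrow> bdd_below ((\<lambda>l. e * Ent n l + Dd n x l) ` Smp n)"
  by (rule bdd_belowI[of _ 0]) (auto intro!: add_nonneg_nonneg mult_nonneg_nonneg Ent_nonneg Dd_nonneg)

lemma phi_nonneg: "0 \<le> e \<Longrightarrow> 0 \<le> phi e n x"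
  unfolding phi_def using Smp_ne by (intro cINF_greatest) (auto intro!: add_nonneg_nonneg mult_nonneg_nonneg Ent_nonneg Dd_nonneg)

lemma phi_le: "0 \<le> e \<Longrightarrow> l \<in> Smp n \<Longrightarrow> phi e n x \<le> e * Ent n l + Dd n x l"
  unfolding phi_def using phi_bdd by (intro cINF_lower) auto

lemma phi_le2:
  assumes "0 \<le> e" "x \<in> unit_ball_C01"
  shows "phi e n x \<le> 2"
proof -
  let ?d = "\<lambda>i. if i = n then 1 else 0 :: real"
  have "phi e n x \<le> e * Ent n ?d + Dd n x ?d"
    using assms delta_Smp[of n n] by (intro phi_le) auto
  also have "\<dots> \<le> 2"
  proof -
    have "Dd n x ?d \<le> 2"
    proof (rule Dd_le)
      fix A assume "A \<subseteq> {..<n}"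
      then have "\<bar>x (pt n A)\<bar> \<le> 1" using ball_abs assms pt_01 by blast
      moreover have "wv n ?d A = 1" unfolding wv_def by simp
      ultimately show "\<bar>x (pt n A) - wv n ?d A\<bar> \<le> 2" by simp
    qed
    then show ?thesis by (simp add: delta_Ent)
  qed
  finally show ?thesis .
qed


lemma phi_lip:
  assumes "x \<in> C01" "y \<in> C01" "0 \<le> e"
  shows "phi e n x \<le> phi e n y + supnorm (\<lambda>s. x s - y s)"
proof -
  define d where "d = supnorm (\<lambda>s. x s - y s)"
  have "phi e n x - d \<le> e * Ent n l + Dd n y l" if l: "l \<in> Smp n" for l
  proof -
    have "Dd n x l \<le> Dd n y l + d"
    proof (rule Dd_le)
      fix A assume A: "A \<subseteq> {..<n}"
      have "\<bar>x (pt n A) - y (pt n A)\<bar> \<le> d"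
        unfolding d_def using diff_le_supnorm assms pt_01[OF A] by blast
      moreover have "\<bar>y (pt n A) - wv n l A\<bar> \<le> Dd n y l" using Dd_ge[OF A] .
      ultimately show "\<bar>x (pt n A) - wv n l A\<bar> \<le> Dd n y l + d" by linarith
    qed
    moreover have "phi e n x \<le> e * Ent n l + Dd n x l" using phi_le assms l by blast
    ultimately show ?thesis by linarith
  qed
  then have "phi e n x - d \<le> phi e n y"
    unfolding phi_def[of e n y] using Smp_ne by (intro cINF_greatest) auto
  then show ?thesis unfolding d_def by linarith
qed

lemma phi_conv:
  assumes "0 \<le> e" "0 \<le> t" "t \<le> 1"
  shows "phi e n (\<lambda>s. t * x s + (1 - t) * y s) \<le> t * phi e n x + (1 - t) * phi e n y + e"
proof -
  define z where "z = (\<lambda>s. t * x s + (1 - t) * y s)"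
  have key: "phi e n z \<le> t * (e * Ent n l + Dd n x l) + (1 - t) * (e * Ent n m + Dd n y m) + e"
    if l: "l \<in> Smp n" and m: "m \<in> Smp n" for l m
  proof -
    define v where "v = (\<lambda>i. t * l i + (1 - t) * m i)"
    have v: "v \<in> Smp n" unfolding v_def using Smp_mix l m assms by blast
    have "phi e n z \<le> e * Ent n v + Dd n z v" using phi_le assms v by blast
    moreover have "e * Ent n v \<le> e * (t * Ent n l + (1 - t) * Ent n m + 1)"
      unfolding v_def using Ent_mix l m assms by (intro mult_left_mono) auto
    moreover have "Dd n z v \<le> t * Dd n x l + (1 - t) * Dd n y m"
    proof (rule Dd_le)
      fix A assume A: "A \<subseteq> {..<n}"
      have "z (pt n A) - wv n v A = t * (x (pt n A) - wv n l A) + (1 - t) * (y (pt n A) - wv n m A)"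
        unfolding z_def v_def wv_mix by (simp add: algebra_simps)
      then have "\<bar>z (pt n A) - wv n v A\<bar> \<le> t * \<bar>x (pt n A) - wv n l A\<bar> + (1 - t) * \<bar>y (pt n A) - wv n m A\<bar>"
        using assms by (simp add: abs_mult order_trans[OF abs_triangle_ineq])
      also have "\<dots> \<le> t * Dd n x l + (1 - t) * Dd n y m"
        using assms Dd_ge[OF A] by (intro add_mono mult_left_mono) auto
      finally show "\<bar>z (pt n A) - wv n v A\<bar> \<le> t * Dd n x l + (1 - t) * Dd n y m" .
    qed
    ultimately show ?thesis by (simp add: algebra_simps)
  qed
  have "phi e n z \<le> t * phi e n x + (1 - t) * phi e n y + e + d" if d: "d > 0" for d
  proof -
    have "phi e n x < phi e n x + d" using d by simp
    then obtain l where l: "l \<in> Smp n" "e * Ent n l + Dd n x l < phi e n x + d"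
      unfolding phi_def[of e n x] using cINF_less_iff[OF Smp_ne phi_bdd[OF assms(1)]] by blast
    have "phi e n y < phi e n y + d" using d by simp
    then obtain m where m: "m \<in> Smp n" "e * Ent n m + Dd n y m < phi e n y + d"
      unfolding phi_def[of e n y] using cINF_less_iff[OF Smp_ne phi_bdd[OF assms(1)]] by blast
    have "phi e n z \<le> t * (e * Ent n l + Dd n x l) + (1 - t) * (e * Ent n m + Dd n y m) + e"
      using key l m by blast
    also have "\<dots> \<le> t * (phi e n x + d) + (1 - t) * (phi e n y + d) + e"
    proof -
      have "t * (e * Ent n l + Dd n x l) \<le> t * (phi e n x + d)"
        using l assms by (intro mult_left_mono) auto
      moreover have "(1 - t) * (e * Ent n m + Dd n y m) \<le> (1 - t) * (phi e n y + d)"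
        using m assms by (intro mult_left_mono) auto
      ultimately show ?thesis by linarith
    qed
    finally show ?thesis by (simp add: algebra_simps)
  qed
  then have "phi e n z \<le> t * phi e n x + (1 - t) * phi e n y + e"
    by (rule field_le_epsilon)
  then show ?thesis unfolding z_def .
qed

lemma FF_bdd: "0 \<le> e \<Longrightarrow> x \<in> unit_ball_C01 \<Longrightarrow> bdd_above (range (\<lambda>n. phi e n x))"
  using phi_le2 by (intro bdd_aboveI[of _ 2]) auto

lemma FF_ge: "0 \<le> e \<Longrightarrow> x \<in> unit_ball_C01 \<Longrightarrow> phi e n x \<le> FF e x"
  unfolding FF_def using FF_bdd by (intro cSUP_upper) auto

lemma FF_nonneg: "0 \<le> e \<Longrightarrow> x \<in> unit_ball_C01 \<Longrightarrow> 0 \<le> FF e x"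
  using FF_ge phi_nonneg order_trans by blast

lemma FF_lip1:
  assumes "0 \<le> e" "x \<in> unit_ball_C01" "y \<in> unit_ball_C01"
  shows "FF e x \<le> FF e y + supnorm (\<lambda>s. x s - y s)"
proof -
  have "phi e n x \<le> FF e y + supnorm (\<lambda>s. x s - y s)" for n
    using phi_lip[of x y e n] FF_ge[OF assms(1,3), of n] assms
    unfolding unit_ball_C01_def by auto
  then show ?thesis unfolding FF_def[of e x] by (intro cSUP_least) auto
qed

lemma supnorm_sym: "supnorm (\<lambda>s. y s - x s) = supnorm (\<lambda>s. x s - y s)"
  unfolding supnorm_def by (simp add: abs_minus_commute)

lemma FF_lip: "0 \<le> e \<Longrightarrow> lipschitz_C01 unit_ball_C01 1 (FF e)"
  unfolding lipschitz_C01_def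
proof (intro ballI)
  fix x y assume "0 \<le> e" "x \<in> unit_ball_C01" "y \<in> unit_ball_C01"
  then have "FF e x \<le> FF e y + supnorm (\<lambda>s. x s - y s)" "FF e y \<le> FF e x + supnorm (\<lambda>s. x s - y s)"
    using FF_lip1[of e x y] FF_lip1[of e y x] supnorm_sym[of y x] by auto
  then show "\<bar>FF e x - FF e y\<bar> \<le> 1 * supnorm (\<lambda>s. x s - y s)" by simp
qed

lemma FF_conv:
  assumes "0 \<le> e"
  shows "eps_convex_C01 unit_ball_C01 e (FF e)"
  unfolding eps_convex_C01_def
proof (intro ballI)
  fix x y t assume x: "x \<in> unit_ball_C01" and y: "y \<in> unit_ball_C01" and t: "t \<in> {0..1::real}"
  have "phi e n (\<lambda>s. t * x s + (1 - t) * y s) \<le> t * FF e x + (1 - t) * FF e y + e" for n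
  proof -
    have "phi e n (\<lambda>s. t * x s + (1 - t) * y s) \<le> t * phi e n x + (1 - t) * phi e n y + e"
      using phi_conv assms t by auto
    also have "\<dots> \<le> t * FF e x + (1 - t) * FF e y + e"
      using t FF_ge[OF assms x] FF_ge[OF assms y] by (intro add_mono mult_left_mono) auto
    finally show ?thesis .
  qed
  then show "FF e (\<lambda>s. t * x s + (1 - t) * y s) \<le> t * FF e x + (1 - t) * FF e y + e"
    unfolding FF_def[of e "\<lambda>s. t * x s + (1 - t) * y s"] by (intro cSUP_least) auto
qed


lemma vert_exists:
  assumes "i < n"
  shows "\<exists>v. v \<in> unit_ball_C01 \<and> (\<forall>A. A \<subseteq> {..<n} \<longrightarrow> v (pt n A) = sg A i) \<and>
           (\<forall>k A. k \<noteq> n \<longrightarrow> A \<subseteq> {..<k} \<longrightarrow> v (pt k A) = 1)"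
proof -
  define P where "P = pt n ` Pow {..<n}"
  define N where "N = pt n ` {A. A \<subseteq> {..<n} \<and> i \<notin> A}"
  have NP: "N \<subseteq> P" unfolding N_def P_def by auto
  have PI: "P \<subseteq> Iv n" unfolding P_def using pt_Iv by auto
  define S where "S = P \<union> (- Iv n)"
  have cS: "closed S" unfolding S_def P_def Iv_def
    by (intro closed_Un finite_imp_closed closed_Compl) auto
  define f0 where "f0 = (\<lambda>s::real. if s \<in> N then -1 else (1::real))"
  have cf: "continuous_on S f0" unfolding S_def
  proof (rule continuous_on_closed_Un)
    show "closed P" unfolding P_def by (intro finite_imp_closed) auto
    show "closed (- Iv n)" unfolding Iv_def by auto
    show "continuous_on P f0" unfolding P_def by (intro continuous_on_finite) auto
    have "continuous_on (- Iv n) (\<lambda>s. 1::real)" by (rule continuous_on_const)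
    moreover have "\<And>s. s \<in> - Iv n \<Longrightarrow> f0 s = 1" unfolding f0_def using NP PI by auto
    ultimately show "continuous_on (- Iv n) f0" using continuous_on_cong by metis
  qed
  have "\<exists>g. continuous_on UNIV g \<and> (\<forall>s\<in>S. g s = f0 s) \<and> (\<forall>s. norm (g s) \<le> (1::real))"
    by (rule Tietze[of S f0 UNIV 1]) (use cf cS in \<open>auto simp: f0_def\<close>)
  then obtain g where g: "continuous_on UNIV g" "\<And>s. s \<in> S \<Longrightarrow> g s = f0 s" "\<And>s. norm (g s) \<le> 1"
    by blast
  define v where "v = (\<lambda>s. if s \<in> {0..1} then g s else 0)"
  have "continuous_on {0..1} v"
    using continuous_on_subset[OF g(1)] continuous_on_cong[of "{0..1}" "{0..1}" v g] unfolding v_def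
    by auto
  then have vC: "v \<in> C01" unfolding C01_def v_def by auto
  have "supnorm v \<le> 1" using g(3) by (intro supnorm_le) (auto simp: v_def)
  then have vB: "v \<in> unit_ball_C01" using vC unfolding unit_ball_C01_def by auto
  have v1: "v (pt n A) = sg A i" if A: "A \<subseteq> {..<n}" for A
  proof -
    have "pt n A \<in> S" unfolding S_def P_def using A by auto
    then have "v (pt n A) = f0 (pt n A)" using g(2) pt_01[OF A] unfolding v_def by auto
    moreover have "pt n A \<in> N \<longleftrightarrow> i \<notin> A"
    proof
      assume "pt n A \<in> N"
      then obtain B where B: "B \<subseteq> {..<n}" "i \<notin> B" "pt n A = pt n B" unfolding N_def by auto
      then have "A = B" using pt_inj A unfolding inj_on_def by auto
      then show "i \<notin> A" using B by simp
    qed (use A in \<open>auto simp: N_def\<close>)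
    ultimately show ?thesis unfolding f0_def sg_def by auto
  qed
  have v2: "v (pt k A) = 1" if k: "k \<noteq> n" and A: "A \<subseteq> {..<k}" for k A
  proof -
    have "pt k A \<in> Iv k" using pt_Iv[OF A] .
    then have nI: "pt k A \<notin> Iv n" using Iv_disj[OF k] by auto
    then have "pt k A \<in> S" unfolding S_def by auto
    then have "v (pt k A) = f0 (pt k A)" using g(2) pt_01[OF A] unfolding v_def by auto
    moreover have "pt k A \<notin> N" using nI NP PI by auto
    ultimately show ?thesis unfolding f0_def by auto
  qed
  show ?thesis using vB v1 v2 by blast
qed

lemma jensen:
  assumes g: "convex_C01 unit_ball_C01 g"
  shows "k \<ge> 1 \<Longrightarrow> (\<forall>i<k. u i \<in> unit_ball_C01) \<Longrightarrow>
    (\<lambda>s. (\<Sum>i<k. u i s) / real k) \<in> unit_ball_C01 \<and>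
    g (\<lambda>s. (\<Sum>i<k. u i s) / real k) \<le> (\<Sum>i<k. g (u i)) / real k"
proof (induction k)
  case 0 then show ?case by simp
next
  case (Suc k)
  show ?case
  proof (cases "k = 0")
    case True
    have "(\<lambda>s. (\<Sum>i<Suc k. u i s) / real (Suc k)) = u 0" using True by auto
    then show ?thesis using True Suc.prems by simp
  next
    case False
    define a where "a = (\<lambda>s. (\<Sum>i<k. u i s) / real k)"
    define t where "t = real k / real (Suc k)"
    have IH: "a \<in> unit_ball_C01" "g a \<le> (\<Sum>i<k. g (u i)) / real k"
      using Suc.IH Suc.prems False unfolding a_def by auto
    have t: "0 \<le> t" "t \<le> 1" unfolding t_def by auto
    have uk: "u k \<in> unit_ball_C01" using Suc.prems by auto
    have eq: "(\<lambda>s. (\<Sum>i<Suc k. u i s) / real (Suc k)) = (\<lambda>s. t * a s + (1 - t) * u k s)"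
    proof
      fix s
      have t1: "1 - t = 1 / real (Suc k)" unfolding t_def by (simp add: field_simps)
      have t2: "t * a s = (\<Sum>i<k. u i s) / real (Suc k)" unfolding t_def a_def using False by simp
      have "t * a s + (1 - t) * u k s = ((\<Sum>i<k. u i s) + u k s) / real (Suc k)"
        by (simp add: t1 t2 add_divide_distrib)
      then show "(\<Sum>i<Suc k. u i s) / real (Suc k) = t * a s + (1 - t) * u k s" by simp
    qed
    have "g (\<lambda>s. t * a s + (1 - t) * u k s) \<le> t * g a + (1 - t) * g (u k)"
      using g IH(1) uk t unfolding convex_C01_def by auto
    also have "\<dots> \<le> t * ((\<Sum>i<k. g (u i)) / real k) + (1 - t) * g (u k)"
      using IH(2) t by (intro add_mono mult_left_mono) auto
    also have "\<dots> = (\<Sum>i<Suc k. g (u i)) / real (Suc k)"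
    proof -
      have t1: "1 - t = 1 / real (Suc k)" unfolding t_def by (simp add: field_simps)
      have t2: "t * ((\<Sum>i<k. g (u i)) / real k) = (\<Sum>i<k. g (u i)) / real (Suc k)"
        using False by (simp add: t_def)
      show ?thesis unfolding t1 t2 by (simp add: add_divide_distrib)
    qed
    finally show ?thesis using eq ball_comb[OF IH(1) uk t] by simp
  qed
qed


lemma lower_elem:
  fixes e M a :: real and n :: nat
  assumes e: "0 < e" and M: "M = exp (2 / e)" and a: "0 \<le> a" "a \<le> 1" and n: "n \<ge> 1"
  shows "e * (- (a * ln a)) + \<bar>a - 1 / real n\<bar> \<ge> a + 1 / real n - (if 1 / M < a then 2 / real n else 0)"
proof (cases "1 / M < a")
  case True
  have "0 \<le> e * (- (a * ln a))" using mult_nonneg_nonneg[of e "- (a * ln a)"] xlnx_nonneg[OF a] e by simp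
  then show ?thesis using True by auto
next
  case False
  have "2 * a \<le> e * (- (a * ln a))"
  proof (cases "a = 0")
    case False
    then have ap: "0 < a" using a by simp
    have "ln a \<le> ln (1 / M)" using \<open>\<not> 1 / M < a\<close> ap M by (subst ln_le_cancel_iff) auto
    also have "ln (1 / M) = - (2 / e)" using M by (simp add: ln_div)
    finally have "2 / e \<le> - ln a" by simp
    then have "e * (2 / e) \<le> e * (- ln a)" using e by (intro mult_left_mono) auto
    then have "2 \<le> e * (- ln a)" using e by simp
    then have "a * 2 \<le> a * (e * (- ln a))" using ap by (intro mult_left_mono) auto
    then show ?thesis by (simp add: algebra_simps)
  qed simp
  then show ?thesis using False by auto
qed

lemma lower_bound:
  fixes e :: real and n :: nat and b :: "real \<Rightarrow> real"
  assumes e: "0 < e" and n: "n \<ge> 1"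
    and b: "\<And>A. A \<subseteq> {..<n} \<Longrightarrow> b (pt n A) = (\<Sum>i<n. sg A i) / real n"
    and l: "l \<in> Smp n"
  shows "2 - 2 * exp (2 / e) / real n \<le> e * Ent n l + Dd n b l"
proof -
  define M where "M = exp (2 / e)"
  have Mp: "0 < M" unfolding M_def by simp
  define A0 where "A0 = {i. i < n \<and> 1 / real n \<le> l i}"
  define K where "K = {i. i < n \<and> 1 / M < l i}"
  have l0: "\<And>i. i \<le> n \<Longrightarrow> 0 \<le> l i" and l1: "sum l {..n} = 1" using l unfolding Smp_def by auto
  have lle: "\<And>i. i \<le> n \<Longrightarrow> l i \<le> 1" using Smp_le1 l by blast
  have A0sub: "A0 \<subseteq> {..<n}" unfolding A0_def by auto
  have "wv n l A0 - b (pt n A0) = (\<Sum>i<n. (l i - 1 / real n) * sg A0 i) + l n"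
    unfolding wv_def b[OF A0sub]
    by (simp add: sum_divide_distrib sum_subtractf left_diff_distrib)
  also have "(\<Sum>i<n. (l i - 1 / real n) * sg A0 i) = (\<Sum>i<n. \<bar>l i - 1 / real n\<bar>)"
    by (intro sum.cong) (auto simp: sg_def A0_def)
  finally have "wv n l A0 - b (pt n A0) = (\<Sum>i<n. \<bar>l i - 1 / real n\<bar>) + l n" .
  moreover have "\<bar>b (pt n A0) - wv n l A0\<bar> \<le> Dd n b l" using Dd_ge[OF A0sub] .
  ultimately have D: "(\<Sum>i<n. \<bar>l i - 1 / real n\<bar>) + l n \<le> Dd n b l" by linarith
  have "Ent n l = (\<Sum>i<n. - (l i * ln (l i))) + - (l n * ln (l n))"
    unfolding Ent_def by (simp add: lessThan_Suc_atMost[symmetric])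
  moreover have "0 \<le> - (l n * ln (l n))" using xlnx_nonneg l0 lle by auto
  ultimately have "(\<Sum>i<n. - (l i * ln (l i))) \<le> Ent n l" by linarith
  then have E: "e * (\<Sum>i<n. - (l i * ln (l i))) \<le> e * Ent n l" using e by (intro mult_left_mono) auto
  have "(\<Sum>i<n. l i + 1 / real n - (if i \<in> K then 2 / real n else 0))
      \<le> (\<Sum>i<n. e * (- (l i * ln (l i))) + \<bar>l i - 1 / real n\<bar>)"
    by (intro sum_mono) (use lower_elem[OF e M_def _ _ n] l0 lle in \<open>auto simp: K_def\<close>)
  also have "\<dots> = e * (\<Sum>i<n. - (l i * ln (l i))) + (\<Sum>i<n. \<bar>l i - 1 / real n\<bar>)"
  proof -
    have gen: "(\<Sum>i\<in>S. e * f i + h i) = e * sum f S + sum h S" for S :: "nat set" and f h :: "nat \<Rightarrow> real"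
      by (simp add: sum.distrib sum_distrib_left)
    show ?thesis by (rule gen)
  qed
  finally have S: "(\<Sum>i<n. l i + 1 / real n - (if i \<in> K then 2 / real n else 0))
      \<le> e * (\<Sum>i<n. - (l i * ln (l i))) + (\<Sum>i<n. \<bar>l i - 1 / real n\<bar>)" .
  have Ksub: "K \<subseteq> {..<n}" unfolding K_def by auto
  have "(\<Sum>i<n. (if i \<in> K then 2 / real n else 0)) = (\<Sum>i\<in>K. 2 / real n)"
    using sum.inter_restrict[of "{..<n}" "\<lambda>_. 2 / real n" K] Ksub by (simp add: Int_absorb1)
  also have "\<dots> = real (card K) * (2 / real n)" by simp
  finally have sK: "(\<Sum>i<n. (if i \<in> K then 2 / real n else 0)) = real (card K) * (2 / real n)" .
  have sl: "(\<Sum>i<n. l i) = 1 - l n"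
    using l1 by (simp add: lessThan_Suc_atMost[symmetric])
  have "(\<Sum>i<n. l i + 1 / real n - (if i \<in> K then 2 / real n else 0))
      = (\<Sum>i<n. l i) + (\<Sum>i<n. 1 / real n) - (\<Sum>i<n. (if i \<in> K then 2 / real n else 0))"
    by (simp add: sum.distrib sum_subtractf)
  also have "\<dots> = 1 - l n + 1 - real (card K) * (2 / real n)"
    using n by (simp add: sl sK)
  finally have S2: "(\<Sum>i<n. l i + 1 / real n - (if i \<in> K then 2 / real n else 0))
      = 2 - l n - real (card K) * (2 / real n)" by simp
  have "(\<Sum>i\<in>K. 1 / M) \<le> (\<Sum>i\<in>K. l i)" by (intro sum_mono) (auto simp: K_def)
  also have "\<dots> \<le> (\<Sum>i\<le>n. l i)" using Ksub l0 by (intro sum_mono2) auto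
  finally have "real (card K) * (1 / M) \<le> 1" using l1 by simp
  then have "real (card K) \<le> M" using Mp by (simp add: field_simps)
  then have "real (card K) * (2 / real n) \<le> M * (2 / real n)" by (intro mult_right_mono) auto
  then have "2 - 2 * M / real n \<le> 2 - real (card K) * (2 / real n)" by (simp add: mult.commute)
  with S S2 D E show ?thesis unfolding M_def[symmetric] by linarith
qed


lemma FF_vertex:
  assumes e: "0 \<le> e" and i: "i < n" and vB: "v \<in> unit_ball_C01"
    and v1: "\<And>A. A \<subseteq> {..<n} \<Longrightarrow> v (pt n A) = sg A i"
    and v2: "\<And>k A. k \<noteq> n \<Longrightarrow> A \<subseteq> {..<k} \<Longrightarrow> v (pt k A) = 1"
  shows "FF e v = 0"
proof -
  have "phi e k v \<le> 0" for k
  proof (cases "k = n")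
    case True
    let ?d = "\<lambda>j. if j = i then 1 else 0 :: real"
    have "phi e k v \<le> e * Ent k ?d + Dd k v ?d"
      using e i True delta_Smp[of i n] by (intro phi_le) auto
    also have "Dd k v ?d \<le> 0"
    proof (rule Dd_le)
      fix A assume A: "A \<subseteq> {..<k}"
      have "(\<Sum>j<n. ?d j * sg A j) = (\<Sum>j<n. if j = i then sg A j else 0)"
        by (intro sum.cong) auto
      also have "\<dots> = sg A i" using i by simp
      finally have "wv k ?d A = sg A i" unfolding wv_def using i True by simp
      then show "\<bar>v (pt k A) - wv k ?d A\<bar> \<le> 0" using v1 A True by simp
    qed
    finally show ?thesis by (simp add: delta_Ent)
  next
    case False
    let ?d = "\<lambda>j. if j = k then 1 else 0 :: real"
    have "phi e k v \<le> e * Ent k ?d + Dd k v ?d"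
      using e delta_Smp[of k k] by (intro phi_le) auto
    also have "Dd k v ?d \<le> 0"
    proof (rule Dd_le)
      fix A assume A: "A \<subseteq> {..<k}"
      have "wv k ?d A = 1" unfolding wv_def by simp
      then show "\<bar>v (pt k A) - wv k ?d A\<bar> \<le> 0" using v2 A False by simp
    qed
    finally show ?thesis by (simp add: delta_Ent)
  qed
  then have "FF e v \<le> 0" unfolding FF_def by (intro cSUP_least) auto
  then show ?thesis using FF_nonneg[OF e vB] by simp
qed

theorem corollary7p11:
  fixes \<epsilon> :: real
  assumes "\<epsilon> > 0"
  shows "\<exists>f :: (real \<Rightarrow> real) \<Rightarrow> real.
           (\<forall>x\<in>unit_ball_C01. f x \<ge> 0) \<and>
           lipschitz_C01 unit_ball_C01 1 f \<and>
           eps_convex_C01 unit_ball_C01 \<epsilon> f \<and>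
           (\<forall>g :: (real \<Rightarrow> real) \<Rightarrow> real. convex_C01 unit_ball_C01 g \<longrightarrow>
              (SUP x\<in>unit_ball_C01. ereal \<bar>f x - g x\<bar>) \<ge> 1)"
proof -
  define M where "M = exp (2 / \<epsilon>)"
  have Mp: "0 < M" unfolding M_def by simp
  have e0: "0 \<le> \<epsilon>" using assms by simp
  have main: "1 \<le> (SUP x\<in>unit_ball_C01. ereal \<bar>FF \<epsilon> x - g x\<bar>)"
    if g: "convex_C01 unit_ball_C01 g" for g
  proof -
    define S where "S = (SUP x\<in>unit_ball_C01. ereal \<bar>FF \<epsilon> x - g x\<bar>)"
    have Sup: "ereal \<bar>FF \<epsilon> x - g x\<bar> \<le> S" if "x \<in> unit_ball_C01" for x
      unfolding S_def using that by (rule SUP_upper)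
    have bnd: "ereal (1 - M / real n) \<le> S" if n: "n \<ge> 1" for n
    proof -
      have "\<forall>i. \<exists>v. i < n \<longrightarrow> (v \<in> unit_ball_C01 \<and> (\<forall>A. A \<subseteq> {..<n} \<longrightarrow> v (pt n A) = sg A i) \<and>
           (\<forall>k A. k \<noteq> n \<longrightarrow> A \<subseteq> {..<k} \<longrightarrow> v (pt k A) = 1))"
        using vert_exists by blast
      then obtain V where V: "\<And>i. i < n \<Longrightarrow> V i \<in> unit_ball_C01 \<and> (\<forall>A. A \<subseteq> {..<n} \<longrightarrow> V i (pt n A) = sg A i) \<and>
           (\<forall>k A. k \<noteq> n \<longrightarrow> A \<subseteq> {..<k} \<longrightarrow> V i (pt k A) = 1)"
        by metis
      define b where "b = (\<lambda>s. (\<Sum>i<n. V i s) / real n)"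
      have bB: "b \<in> unit_ball_C01" and gb: "g b \<le> (\<Sum>i<n. g (V i)) / real n"
        using jensen[OF g, of n V] n V unfolding b_def by auto
      have bp: "b (pt n A) = (\<Sum>i<n. sg A i) / real n" if "A \<subseteq> {..<n}" for A
        unfolding b_def using V that by simp
      have "2 - 2 * M / real n \<le> phi \<epsilon> n b"
        unfolding phi_def M_def using Smp_ne
        by (intro cINF_greatest lower_bound[OF assms n]) (auto simp: bp)
      also have "\<dots> \<le> FF \<epsilon> b" using FF_ge[OF e0 bB] .
      finally have Fb: "2 - 2 * M / real n \<le> FF \<epsilon> b" .
      have FV: "FF \<epsilon> (V i) = 0" if "i < n" for i
        using FF_vertex[OF e0 that] V[OF that] by blast
      show ?thesis
      proof (cases "1 - M / real n \<le> FF \<epsilon> b - g b")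
        case True
        then have "ereal (1 - M / real n) \<le> ereal \<bar>FF \<epsilon> b - g b\<bar>" by simp
        then show ?thesis using Sup[OF bB] by (rule order_trans)
      next
        case False
        then have gt: "1 - M / real n < (\<Sum>i<n. g (V i)) / real n" using gb Fb by linarith
        have "\<exists>i<n. 1 - M / real n \<le> g (V i)"
        proof (rule ccontr)
          assume "\<not> ?thesis"
          then have "\<And>i. i < n \<Longrightarrow> g (V i) \<le> 1 - M / real n" by auto
          then have "(\<Sum>i<n. g (V i)) \<le> real n * (1 - M / real n)"
            using sum_bounded_above[of "{..<n}" "\<lambda>i. g (V i)" "1 - M / real n"] by auto
          then have "(\<Sum>i<n. g (V i)) / real n \<le> (real n * (1 - M / real n)) / real n"
            by (rule divide_right_mono) auto
          also have "\<dots> = 1 - M / real n" using n by simp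
          finally have "(\<Sum>i<n. g (V i)) / real n \<le> 1 - M / real n" .
          then show False using gt by simp
        qed
        then obtain i where i: "i < n" "1 - M / real n \<le> g (V i)" by blast
        then have "ereal (1 - M / real n) \<le> ereal \<bar>FF \<epsilon> (V i) - g (V i)\<bar>" using FV[OF i(1)] by simp
        then show ?thesis using Sup V[OF i(1)] by (meson order_trans)
      qed
    qed
    show ?thesis unfolding S_def[symmetric]
    proof (rule ccontr)
      assume "\<not> 1 \<le> S"
      then have S1: "S < 1" by simp
      have "ereal (1 - M) \<le> S" using bnd[of 1] by simp
      then obtain r where r: "S = ereal r" using S1 by (cases S) auto
      then have r1: "r < 1" using S1 by simp
      obtain n :: nat where nb: "M / (1 - r) < real n" using reals_Archimedean2 by blast
      have "0 < M / (1 - r)" using Mp r1 by simp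
      then have n1: "n \<ge> 1" using nb by (cases n) auto
      have "M < real n * (1 - r)" using nb r1 by (simp add: field_simps)
      then have "r < 1 - M / real n" using n1 by (simp add: field_simps)
      moreover have "1 - M / real n \<le> r" using bnd[OF n1] r by simp
      ultimately show False by simp
    qed
  qed
  show ?thesis
    using FF_nonneg[OF e0] FF_lip[OF e0] FF_conv[OF e0] main by blast
qed

end
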